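(* Let $\lambda>1$ and suppose $(P_\lambda)$ is feasible. Let $x^*$ be an optimal solution to $(P_\lambda)$ and $\mathcal{L}$ a laminar decomposition of $x^*$; let $x'$ and $\mathcal{L}'$ be such that $(x',\mathcal{L}')$ is a rainbow-free decomposition with $\mathrm{supp}(x')\subseteq\mathrm{supp}(x^* )$, $\mathcal{L}\subseteq\mathcal{L}'$ and $x'(\delta(S))\le x^*(\delta(S))$ for all $S\in\mathcal{S}$; and let $T$ be a spanning tree of $G$ obtained as the concatenation of spanning trees $T_L\subseteq\mathrm{supp}(x')$ of $G^{\mathcal{L}'}_L$, one for each $L\in\mathcal{L}'$. Let $y^*$ be an optimal solution to $\max_{y\in\mathbb{R}^{\mathcal{S}}_{\ge0}}g_\lambda(y)$. Then $c(T)\le\sum_ec^{y^*}_ex^*_e=\sum_ec_ex^*_e+\lambda\sum_{S\in\mathcal{S}}b_Sy^*_S$.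
   Context: Setting: $G=(V,E)$ undirected connected graph, costs $c_e\ge0$, a chain $\mathcal{S}$ of node sets $S_1\subsetneq\dots\subsetneq S_\ell\subsetneq V$, integers $b_S$. $E(S)$ = edges with both ends in $S$, $\delta(S)$ = edges with exactly one end in $S$, $z(F)=\sum_{e\in F}z_e$, $\mathrm{supp}(z)=\{e:z_e>0\}$, $c(T)=\sum_{e\in T}c_e$. $P_{ST}(G)=\{x\in\mathbb{R}^E_{\ge0}: x(E(S))\le|S|-1\ \forall\emptyset\ne S\subsetneq V,\ x(E)=|V|-1\}$. $(P_\lambda)$: minimize $\sum_ec_ex_e$ over $x\in P_{ST}(G)$ with $x(\delta(S))\le\lambda b_S$ for all $S\in\mathcal{S}$. For $y\in\mathbb{R}^{\mathcal{S}}$, $c^y_e=c_e+\sum_{S\in\mathcal{S}:e\in\delta(S)}y_S$ and $g_\lambda(y)=\min_{x\in P_{ST}(G)}\big(\sum_ec^y_ex_e-\lambda\sum_Sb_Sy_S\big)$. A laminar decomposition of $x\in P_{ST}(G)$ is an inclusion-wise maximal laminar family of nonempty sets $A\subseteq V$ with $x(E(A))=|A|-1$. For a laminar family $\mathcal{L}$ and $L\in\mathcal{L}$, $G^{\mathcal{L}}_L$ is obtained from $(L,E(L))$ by contracting the maximal members of $\mathcal{L}$ strictly contained in $L$. With $\mathcal{S}_e=\{S\in\mathcal{S}:e\in\delta(S)\}$, edges $e,f$ form a rainbow if $\mathcal{S}_e\subseteq\mathcal{S}_f$ or $\mathcal{S}_f\subseteq\mathcal{S}_e$; $(x,\mathcal{L})$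 is a rainbow-free decomposition if $\mathcal{L}$ is a laminar decomposition of $x$ and for every $L\in\mathcal{L}$ no two edges of $\mathrm{supp}(x)\cap E(G^{\mathcal{L}}_L)$ form a rainbow. *)

theory Defs
  imports Complex_Main
begin

text \<open>A finite undirected (multi)graph: vertex set V, edge identifiers E,
  and an endpoint map ends assigning each edge its two distinct endpoints.\<close>

definition graph :: "'a set \<Rightarrow> 'e set \<Rightarrow> ('e \<Rightarrow> 'a set) \<Rightarrow> bool" where
  "graph V E ends \<longleftrightarrow> finite V \<and> finite E \<and>
     (\<forall>e\<in>E. ends e \<subseteq> V \<and> card (ends e) = 2)"

definition adj :: "'e set \<Rightarrow> ('e \<Rightarrow> 'n set) \<Rightarrow> ('n \<times> 'n) set" where
  "adj F en = {(u, v). \<exists>e\<in>F. en e = {u, v}}"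

definition connected_on :: "'n set \<Rightarrow> 'e set \<Rightarrow> ('e \<Rightarrow> 'n set) \<Rightarrow> bool" where
  "connected_on N F en \<longleftrightarrow> (\<forall>u\<in>N. \<forall>v\<in>N. (u, v) \<in> (adj F en)\<^sup>*)"

definition spanning_tree :: "'n set \<Rightarrow> 'e set \<Rightarrow> ('e \<Rightarrow> 'n set) \<Rightarrow> 'e set \<Rightarrow> bool" where
  "spanning_tree N F en T \<longleftrightarrow> T \<subseteq> F \<and> finite T \<and> connected_on N T en \<and> card T + 1 = card N"

definition Ein :: "'e set \<Rightarrow> ('e \<Rightarrow> 'a set) \<Rightarrow> 'a set \<Rightarrow> 'e set" where
  "Ein E ends S = {e\<in>E. ends e \<subseteq> S}"

definition delta :: "'e set \<Rightarrow> ('e \<Rightarrow> 'a set) \<Rightarrow> 'a set \<Rightarrow> 'e set" where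
  "delta E ends S = {e\<in>E. card (ends e \<inter> S) = 1}"

definition supp :: "'e set \<Rightarrow> ('e \<Rightarrow> real) \<Rightarrow> 'e set" where
  "supp E z = {e\<in>E. z e > 0}"

definition PST :: "'a set \<Rightarrow> 'e set \<Rightarrow> ('e \<Rightarrow> 'a set) \<Rightarrow> ('e \<Rightarrow> real) set" where
  "PST V E ends = {x. (\<forall>e\<in>E. x e \<ge> 0) \<and>
      (\<forall>S. S \<noteq> {} \<and> S \<subset> V \<longrightarrow> sum x (Ein E ends S) \<le> real (card S) - 1) \<and>
      sum x E = real (card V) - 1}"

definition chain_family :: "'a set \<Rightarrow> 'a set set \<Rightarrow> bool" where
  "chain_family V \<S> \<longleftrightarrow> finite \<S> \<and> (\<forall>S\<in>\<S>. S \<subset> V) \<and>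
     (\<forall>S\<in>\<S>. \<forall>S'\<in>\<S>. S \<subseteq> S' \<or> S' \<subseteq> S)"

definition feasible_P :: "'a set \<Rightarrow> 'e set \<Rightarrow> ('e \<Rightarrow> 'a set) \<Rightarrow> 'a set set \<Rightarrow>
    ('a set \<Rightarrow> int) \<Rightarrow> real \<Rightarrow> ('e \<Rightarrow> real) \<Rightarrow> bool" where
  "feasible_P V E ends \<S> b lam x \<longleftrightarrow> x \<in> PST V E ends \<and>
     (\<forall>S\<in>\<S>. sum x (delta E ends S) \<le> lam * real_of_int (b S))"

definition optimal_P :: "'a set \<Rightarrow> 'e set \<Rightarrow> ('e \<Rightarrow> 'a set) \<Rightarrow> ('e \<Rightarrow> real) \<Rightarrow> 'a set set \<Rightarrow>
    ('a set \<Rightarrow> int) \<Rightarrow> real \<Rightarrow> ('e \<Rightarrow> real) \<Rightarrow> bool" where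
  "optimal_P V E ends c \<S> b lam x \<longleftrightarrow> feasible_P V E ends \<S> b lam x \<and>
     (\<forall>x'. feasible_P V E ends \<S> b lam x' \<longrightarrow> (\<Sum>e\<in>E. c e * x e) \<le> (\<Sum>e\<in>E. c e * x' e))"

definition cy :: "'e set \<Rightarrow> ('e \<Rightarrow> 'a set) \<Rightarrow> ('e \<Rightarrow> real) \<Rightarrow> 'a set set \<Rightarrow>
    ('a set \<Rightarrow> real) \<Rightarrow> 'e \<Rightarrow> real" where
  "cy E ends c \<S> y e = c e + (\<Sum>S\<in>{S\<in>\<S>. e \<in> delta E ends S}. y S)"

definition g_lam :: "'a set \<Rightarrow> 'e set \<Rightarrow> ('e \<Rightarrow> 'a set) \<Rightarrow> ('e \<Rightarrow> real) \<Rightarrow> 'a set set \<Rightarrow>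
    ('a set \<Rightarrow> int) \<Rightarrow> real \<Rightarrow> ('a set \<Rightarrow> real) \<Rightarrow> real" where
  "g_lam V E ends c \<S> b lam y =
     Inf ((\<lambda>x. (\<Sum>e\<in>E. cy E ends c \<S> y e * x e) - lam * (\<Sum>S\<in>\<S>. real_of_int (b S) * y S))
          ` PST V E ends)"

definition optimal_dual :: "'a set \<Rightarrow> 'e set \<Rightarrow> ('e \<Rightarrow> 'a set) \<Rightarrow> ('e \<Rightarrow> real) \<Rightarrow> 'a set set \<Rightarrow>
    ('a set \<Rightarrow> int) \<Rightarrow> real \<Rightarrow> ('a set \<Rightarrow> real) \<Rightarrow> bool" where
  "optimal_dual V E ends c \<S> b lam y \<longleftrightarrow> (\<forall>S\<in>\<S>. y S \<ge> 0) \<and>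
     (\<forall>y'. (\<forall>S\<in>\<S>. y' S \<ge> 0) \<longrightarrow> g_lam V E ends c \<S> b lam y' \<le> g_lam V E ends c \<S> b lam y)"

definition tight :: "'a set \<Rightarrow> 'e set \<Rightarrow> ('e \<Rightarrow> 'a set) \<Rightarrow> ('e \<Rightarrow> real) \<Rightarrow> 'a set \<Rightarrow> bool" where
  "tight V E ends x A \<longleftrightarrow> A \<noteq> {} \<and> A \<subseteq> V \<and> sum x (Ein E ends A) = real (card A) - 1"

definition laminar :: "'a set set \<Rightarrow> bool" where
  "laminar \<L> \<longleftrightarrow> (\<forall>A\<in>\<L>. \<forall>B\<in>\<L>. A \<subseteq> B \<or> B \<subseteq> A \<or> A \<inter> B = {})"

definition laminar_decomp :: "'a set \<Rightarrow> 'e set \<Rightarrow> ('e \<Rightarrow> 'a set) \<Rightarrow> ('e \<Rightarrow> real) \<Rightarrow> 'a set set \<Rightarrow> bool" where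
  "laminar_decomp V E ends x \<L> \<longleftrightarrow> x \<in> PST V E ends \<and>
     laminar \<L> \<and> (\<forall>A\<in>\<L>. tight V E ends x A) \<and>
     (\<forall>\<L>'. \<L> \<subseteq> \<L>' \<and> laminar \<L>' \<and> (\<forall>A\<in>\<L>'. tight V E ends x A) \<longrightarrow> \<L>' = \<L>)"

definition children :: "'a set set \<Rightarrow> 'a set \<Rightarrow> 'a set set" where
  "children \<L> L0 = {C\<in>\<L>. C \<subset> L0 \<and> \<not> (\<exists>D\<in>\<L>. C \<subset> D \<and> D \<subset> L0)}"

text \<open>Node of the contracted graph G^L_{L0} that vertex v is mapped to.\<close>
definition cls :: "'a set set \<Rightarrow> 'a set \<Rightarrow> 'a \<Rightarrow> 'a set" where
  "cls \<L> L0 v = (if \<exists>C\<in>children \<L> L0. v \<in> C then (THE C. C \<in> children \<L> L0 \<and> v \<in> C) else {v})"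

definition contr_nodes :: "'a set set \<Rightarrow> 'a set \<Rightarrow> 'a set set" where
  "contr_nodes \<L> L0 = cls \<L> L0 ` L0"

text \<open>Edges of G^L_{L0}: edges of E(L0) not becoming loops (not inside a contracted child).\<close>
definition contr_edges :: "'e set \<Rightarrow> ('e \<Rightarrow> 'a set) \<Rightarrow> 'a set set \<Rightarrow> 'a set \<Rightarrow> 'e set" where
  "contr_edges E ends \<L> L0 = {e\<in>Ein E ends L0. \<not> (\<exists>C\<in>children \<L> L0. ends e \<subseteq> C)}"

definition contr_ends :: "('e \<Rightarrow> 'a set) \<Rightarrow> 'a set set \<Rightarrow> 'a set \<Rightarrow> 'e \<Rightarrow> 'a set set" where
  "contr_ends ends \<L> L0 e = cls \<L> L0 ` ends e"

definition cut_sets :: "'e set \<Rightarrow> ('e \<Rightarrow> 'a set) \<Rightarrow> 'a set set \<Rightarrow> 'e \<Rightarrow> 'a set set" where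
  "cut_sets E ends \<S> e = {S\<in>\<S>. e \<in> delta E ends S}"

definition rainbow :: "'e set \<Rightarrow> ('e \<Rightarrow> 'a set) \<Rightarrow> 'a set set \<Rightarrow> 'e \<Rightarrow> 'e \<Rightarrow> bool" where
  "rainbow E ends \<S> e f \<longleftrightarrow> cut_sets E ends \<S> e \<subseteq> cut_sets E ends \<S> f \<or>
                             cut_sets E ends \<S> f \<subseteq> cut_sets E ends \<S> e"

definition rainbow_free :: "'a set \<Rightarrow> 'e set \<Rightarrow> ('e \<Rightarrow> 'a set) \<Rightarrow> 'a set set \<Rightarrow>
    ('e \<Rightarrow> real) \<Rightarrow> 'a set set \<Rightarrow> bool" where
  "rainbow_free V E ends \<S> x \<L> \<longleftrightarrow> laminar_decomp V E ends x \<L> \<and>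
     (\<forall>L0\<in>\<L>. \<forall>e\<in>supp E x \<inter> contr_edges E ends \<L> L0. \<forall>f\<in>supp E x \<inter> contr_edges E ends \<L> L0.
        e \<noteq> f \<longrightarrow> \<not> rainbow E ends \<S> e f)"

end

theory Submission
  imports Defs "HOL-Analysis.Analysis"
begin



lemma compact_sublevel:
  fixes X :: "'x::topological_space set" and h :: "'x \<Rightarrow> real"
  assumes "compact X" "continuous_on X h"
  shows "compact {x\<in>X. h x \<le> c}"
proof -
  have "closedin (top_of_set X) (X \<inter> h -` {..c})"
    by (rule continuous_closedin_preimage[OF assms(2)]) auto
  moreover have "X \<inter> h -` {..c} = {x\<in>X. h x \<le> c}" by auto
  ultimately show ?thesis using closedin_compact[OF assms(1)] by auto
qed

lemma pairwise_ineq: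
  fixes f1 f2 h1 h2 m :: real
  assumes "h1 > 0" "h2 < 0" "m \<le> t*f1 + (1-t)*f2" "t = -h2/(h1-h2)"
  shows "(m - f1)/h1 \<le> (f2 - m)/(-h2)"
proof -
  have d: "h1 - h2 > 0" using assms by auto
  have t1: "t*(h1-h2) = -h2" using d by (simp add: assms(4))
  have t2: "(1-t)*(h1-h2) = h1" using t1 by (simp add: algebra_simps)
  have "(t*f1 + (1-t)*f2)*(h1-h2) = f1*(t*(h1-h2)) + f2*((1-t)*(h1-h2))" by (simp add: algebra_simps)
  also have "\<dots> = -h2*f1 + h1*f2" using t1 t2 by simp
  finally have e: "(t*f1 + (1-t)*f2)*(h1-h2) = -h2*f1 + h1*f2" .
  have "m*(h1-h2) \<le> (t*f1 + (1-t)*f2)*(h1-h2)" using assms(3) d by (simp add: mult_right_mono)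
  also note e
  finally have "m*(h1-h2) \<le> -h2*f1 + h1*f2" .
  hence "h1 * (m - f2) \<le> h2 * (m - f1)" by (simp add: algebra_simps)
  thus ?thesis using assms(1,2) by (simp add: divide_simps mult.commute)
qed

lemma one_dim:
  fixes X :: "'x::topological_space set" and f h :: "'x \<Rightarrow> real"
    and cmb :: "real \<Rightarrow> 'x \<Rightarrow> 'x \<Rightarrow> 'x"
  assumes cX: "compact X"
    and conv: "\<And>x z t. x\<in>X \<Longrightarrow> z\<in>X \<Longrightarrow> 0\<le>t \<Longrightarrow> t\<le>1 \<Longrightarrow> cmb t x z \<in> X"
    and cf: "continuous_on X f" and ch: "continuous_on X h"
    and af: "\<And>x z t. x\<in>X \<Longrightarrow> z\<in>X \<Longrightarrow> 0\<le>t \<Longrightarrow> t\<le>1 \<Longrightarrow> f (cmb t x z) = t * f x + (1-t) * f z"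
    and ah: "\<And>x z t. x\<in>X \<Longrightarrow> z\<in>X \<Longrightarrow> 0\<le>t \<Longrightarrow> t\<le>1 \<Longrightarrow> h (cmb t x z) = t * h x + (1-t) * h z"
    and x0: "x0 \<in> X" "h x0 \<le> 0"
    and bnd: "\<And>x. x\<in>X \<Longrightarrow> h x \<le> 0 \<Longrightarrow> m \<le> f x"
    and eps: "\<epsilon> > 0"
  shows "\<exists>y\<ge>0. \<forall>x\<in>X. m - \<epsilon> \<le> f x + y * h x"
proof (cases "\<exists>x2\<in>X. h x2 < 0")
  case True
  then obtain x2 where x2: "x2 \<in> X" "h x2 < 0" by blast
  have pw: "(m - f x1)/h x1 \<le> (f z - m)/(-h z)" if "x1\<in>X" "h x1 > 0" "z \<in> X" "h z < 0" for x1 z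
  proof -
    define t where "t = -h z/(h x1 - h z)"
    have t01: "0 \<le> t" "t \<le> 1" using that by (auto simp: t_def divide_simps)
    have "h (cmb t x1 z) = t * h x1 + (1-t) * h z" using ah that t01 by auto
    also have "\<dots> = 0" using that by (simp add: t_def field_simps)
    finally have "m \<le> f (cmb t x1 z)" using bnd conv that t01 by auto
    also have "\<dots> = t * f x1 + (1-t) * f z" using af that t01 by auto
    finally show ?thesis using pairwise_ineq that t_def by blast
  qed
  define A where "A = insert 0 {(m - f x)/h x | x. x\<in>X \<and> h x > 0}"
  define y where "y = Sup A"
  have bddA: "bdd_above A"
    unfolding A_def bdd_above_def
    by (rule exI[of _ "max 0 ((f x2 - m)/(-h x2))"]) (use pw x2 in force)
  have y0: "y \<ge> 0" unfolding y_def by (rule cSup_upper[OF _ bddA]) (simp add: A_def)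
  have "m - \<epsilon> \<le> f x + y * h x" if x: "x \<in> X" for x
  proof (cases "h x > 0")
    case True
    have "(m - f x)/h x \<le> y" unfolding y_def
      by (rule cSup_upper[OF _ bddA]) (use x True in \<open>auto simp: A_def\<close>)
    hence "m - f x \<le> y * h x" using True by (simp add: divide_simps)
    then show ?thesis using eps by linarith
  next
    case False
    show ?thesis
    proof (cases "h x = 0")
      case True then show ?thesis using bnd x eps by force
    next
      case False
      with \<open>\<not> h x > 0\<close> have hn: "h x < 0" by auto
      have "y \<le> (f x - m)/(-h x)" unfolding y_def
      proof (rule cSup_least)
        show "A \<noteq> {}" by (simp add: A_def)
        fix a assume "a \<in> A"
        then show "a \<le> (f x - m)/(-h x)"
        proof -
          have "0 \<le> (f x - m)/(-h x)" using bnd[OF x] hn by (intro divide_nonneg_nonneg) auto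
          then show ?thesis using \<open>a \<in> A\<close> pw[OF _ _ x hn] by (auto simp: A_def)
        qed
      qed
      hence "y * (- h x) \<le> f x - m" using hn by (simp add: divide_simps)
      then show ?thesis using eps by (simp add: algebra_simps)
    qed
  qed
  then show ?thesis using y0 by blast
next
  case False
  hence hpos: "\<And>x. x \<in> X \<Longrightarrow> h x \<ge> 0" by force
  obtain xf where xf: "xf \<in> X" "\<And>z. z\<in>X \<Longrightarrow> f xf \<le> f z"
    using continuous_attains_inf[OF cX _ cf] x0 by blast
  define K where "K = {x\<in>X. f x \<le> m - \<epsilon>}"
  show ?thesis
  proof (cases "K = {}")
    case True
    then have "\<forall>x\<in>X. m - \<epsilon> \<le> f x + 0 * h x" by (force simp: K_def)
    then show ?thesis by blast
  next
    case False
    have cK: "compact K" unfolding K_def by (rule compact_sublevel[OF cX cf])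
    have "continuous_on K h" using ch by (rule continuous_on_subset) (auto simp: K_def)
    then obtain xk where xk: "xk \<in> K" "\<And>z. z\<in>K \<Longrightarrow> h xk \<le> h z"
      using continuous_attains_inf[OF cK False] by blast
    define \<delta> where "\<delta> = h xk"
    have dpos: "\<delta> > 0"
    proof (rule ccontr)
      assume "\<not> \<delta> > 0"
      then have "h xk \<le> 0" by (simp add: \<delta>_def)
      then have "m \<le> f xk" using bnd xk(1) by (auto simp: K_def)
      then show False using xk(1) eps by (auto simp: K_def)
    qed
    define y where "y = max 0 ((m - \<epsilon> - f xf)/\<delta>)"
    have "m - \<epsilon> \<le> f x + y * h x" if x: "x \<in> X" for x
    proof (cases "h x < \<delta>")
      case True
      then have "x \<notin> K" using xk(2) by (force simp: \<delta>_def)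
      then have "m - \<epsilon> < f x" using x by (auto simp: K_def)
      moreover have "0 \<le> y * h x" using hpos[OF x] by (simp add: y_def)
      ultimately show ?thesis by linarith
    next
      case False
      have "y * \<delta> \<le> y * h x" using False by (intro mult_left_mono) (auto simp: y_def)
      moreover have "m - \<epsilon> - f xf \<le> y * \<delta>"
        using dpos by (auto simp: y_def divide_simps max_def)
      ultimately show ?thesis using xf(2)[OF x] by linarith
    qed
    then show ?thesis by (auto simp: y_def intro!: exI[of _ y])
  qed
qed

lemma multi_dim:
  fixes X :: "'x::topological_space set" and f :: "'x \<Rightarrow> real" and h :: "'i \<Rightarrow> 'x \<Rightarrow> real"
    and cmb :: "real \<Rightarrow> 'x \<Rightarrow> 'x \<Rightarrow> 'x"
  assumes "finite I"
    and "compact X"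
    and "\<And>x z t. x\<in>X \<Longrightarrow> z\<in>X \<Longrightarrow> 0\<le>t \<Longrightarrow> t\<le>1 \<Longrightarrow> cmb t x z \<in> X"
    and "continuous_on X f" and "\<And>i. i\<in>I \<Longrightarrow> continuous_on X (h i)"
    and "\<And>x z t. x\<in>X \<Longrightarrow> z\<in>X \<Longrightarrow> 0\<le>t \<Longrightarrow> t\<le>1 \<Longrightarrow> f (cmb t x z) = t * f x + (1-t) * f z"
    and "\<And>i x z t. i\<in>I \<Longrightarrow> x\<in>X \<Longrightarrow> z\<in>X \<Longrightarrow> 0\<le>t \<Longrightarrow> t\<le>1 \<Longrightarrow> h i (cmb t x z) = t * h i x + (1-t) * h i z"
    and "x0 \<in> X" "\<And>i. i\<in>I \<Longrightarrow> h i x0 \<le> 0"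
    and "\<And>x. x\<in>X \<Longrightarrow> (\<forall>i\<in>I. h i x \<le> 0) \<Longrightarrow> m \<le> f x"
    and "\<epsilon> > 0"
  shows "\<exists>y. (\<forall>i\<in>I. 0 \<le> y i) \<and> (\<forall>x\<in>X. m - \<epsilon> \<le> f x + (\<Sum>i\<in>I. y i * h i x))"
  using assms(1-11)
proof (induction I arbitrary: X f m \<epsilon> rule: finite_induct)
  case empty
  have "\<forall>x\<in>X. m - \<epsilon> \<le> f x + (\<Sum>i\<in>{}. (\<lambda>_. 0::real) i * h i x)"
    using empty.prems(9,10) by fastforce
  then show ?case by (intro exI[of _ "\<lambda>_. 0"]) simp
next
  case (insert j I)
  define Xj where "Xj = {x\<in>X. h j x \<le> 0}"
  have cXj: "compact Xj" unfolding Xj_def by (rule compact_sublevel) (use insert in auto)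
  have convj: "cmb t x z \<in> Xj" if "x\<in>Xj" "z\<in>Xj" "0\<le>t" "t\<le>1" for x z t
  proof -
    have "h j (cmb t x z) = t * h j x + (1-t) * h j z" using insert.prems(6)[of j x z t] that by (auto simp: Xj_def)
    also have "\<dots> \<le> 0" using that by (auto simp: Xj_def intro!: add_nonpos_nonpos mult_nonneg_nonpos)
    finally show ?thesis using insert.prems(2) that by (auto simp: Xj_def)
  qed
  have "\<exists>y. (\<forall>i\<in>I. 0 \<le> y i) \<and> (\<forall>x\<in>Xj. (m - \<epsilon>/2) \<le> f x + (\<Sum>i\<in>I. y i * h i x))"
  proof (rule insert.IH[of Xj f m "\<epsilon>/2"])
    show "continuous_on Xj f" using insert.prems(3) by (rule continuous_on_subset) (auto simp: Xj_def)
    show "continuous_on Xj (h i)" if "i \<in> I" for i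
    proof -
      have "continuous_on X (h i)" using insert.prems(4)[of i] that by simp
      then show ?thesis by (rule continuous_on_subset) (auto simp: Xj_def)
    qed
    show "x0 \<in> Xj" using insert.prems(7,8) by (auto simp: Xj_def)
    show "m \<le> f x" if "x \<in> Xj" "\<forall>i\<in>I. h i x \<le> 0" for x
      using insert.prems(9)[of x] that by (auto simp: Xj_def)
    show "compact Xj" by (rule cXj)
    show "cmb t x z \<in> Xj" if "x\<in>Xj" "z\<in>Xj" "0\<le>t" "t\<le>1" for x z t using convj that by blast
    show "f (cmb t x z) = t * f x + (1-t) * f z" if "x\<in>Xj" "z\<in>Xj" "0\<le>t" "t\<le>1" for x z t
      using insert.prems(5) that by (simp add: Xj_def)
    show "h i (cmb t x z) = t * h i x + (1-t) * h i z" if "i\<in>I" "x\<in>Xj" "z\<in>Xj" "0\<le>t" "t\<le>1" for i x z t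
      using insert.prems(6)[of i x z t] that by (simp add: Xj_def)
    show "h i x0 \<le> 0" if "i \<in> I" for i using insert.prems(8) that by simp
    show "\<epsilon>/2 > 0" using insert.prems(10) by simp
  qed
  then obtain y where y: "\<forall>i\<in>I. 0 \<le> y i" "\<forall>x\<in>Xj. m - \<epsilon>/2 \<le> f x + (\<Sum>i\<in>I. y i * h i x)" by blast
  define f' where "f' = (\<lambda>x. f x + (\<Sum>i\<in>I. y i * h i x))"
  have "\<exists>yj\<ge>0. \<forall>x\<in>X. (m - \<epsilon>/2) - \<epsilon>/2 \<le> f' x + yj * h j x"
  proof (rule one_dim[of X cmb f' "h j" x0])
    show "continuous_on X f'" unfolding f'_def
      by (intro continuous_on_add continuous_on_sum continuous_on_mult continuous_on_const) (use insert.prems(3,4) in auto)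
    show "f' (cmb t x z) = t * f' x + (1-t) * f' z" if "x\<in>X" "z\<in>X" "0\<le>t" "t\<le>1" for x z t
    proof -
      have "(\<Sum>i\<in>I. y i * h i (cmb t x z)) = (\<Sum>i\<in>I. t * (y i * h i x) + (1-t) * (y i * h i z))"
      proof (rule sum.cong)
        fix i assume "i \<in> I"
        then have e: "h i (cmb t x z) = t * h i x + (1-t) * h i z" using insert.prems(6)[of i x z t] that by simp
        show "y i * h i (cmb t x z) = t * (y i * h i x) + (1-t) * (y i * h i z)" unfolding e by (simp add: algebra_simps)
      qed simp
      also have "\<dots> = t * (\<Sum>i\<in>I. y i * h i x) + (1-t) * (\<Sum>i\<in>I. y i * h i z)"
        by (simp add: sum.distrib sum_distrib_left)
      finally show ?thesis unfolding f'_def using insert.prems(5) that by (simp add: algebra_simps)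
    qed
    show "m - \<epsilon> / 2 \<le> f' x" if "x \<in> X" "h j x \<le> 0" for x
      using y(2) that by (auto simp: f'_def Xj_def)
    show "compact X" by (rule insert.prems(1))
    show "cmb t x z \<in> X" if "x\<in>X" "z\<in>X" "0\<le>t" "t\<le>1" for x z t using insert.prems(2) that by blast
    show "continuous_on X (h j)" using insert.prems(4) by simp
    show "h j (cmb t x z) = t * h j x + (1-t) * h j z" if "x\<in>X" "z\<in>X" "0\<le>t" "t\<le>1" for x z t
      using insert.prems(6)[of j x z t] that by simp
    show "x0 \<in> X" by (rule insert.prems(7))
    show "h j x0 \<le> 0" using insert.prems(8) by simp
    show "\<epsilon>/2 > 0" using insert.prems(10) by simp
  qed
  then obtain yj where yj: "yj \<ge> 0" "\<forall>x\<in>X. (m - \<epsilon>/2) - \<epsilon>/2 \<le> f' x + yj * h j x" by blast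
  define y' where "y' = y(j := yj)"
  have eqs: "(\<Sum>i\<in>insert j I. y' i * h i x) = yj * h j x + (\<Sum>i\<in>I. y i * h i x)" for x
  proof -
    have "(\<Sum>i\<in>I. y' i * h i x) = (\<Sum>i\<in>I. y i * h i x)"
      using insert.hyps(2) by (intro sum.cong refl) (auto simp: y'_def)
    then show ?thesis using insert.hyps by (simp add: y'_def)
  qed
  have "\<forall>x\<in>X. m - \<epsilon> \<le> f x + (\<Sum>i\<in>insert j I. y' i * h i x)"
    using yj(2) unfolding eqs f'_def by (simp add: algebra_simps)
  moreover have "\<forall>i\<in>insert j I. 0 \<le> y' i" using y(1) yj(1) by (auto simp: y'_def)
  ultimately show ?case by blast
qed




lemma child_disj:
  assumes "laminar F" "C1 \<in> children F L" "C2 \<in> children F L" "C1 \<noteq> C2"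
  shows "C1 \<inter> C2 = {}"
proof -
  have c1: "C1 \<in> F" "C1 \<subset> L" "\<not> (\<exists>D\<in>F. C1 \<subset> D \<and> D \<subset> L)" using assms(2) by (auto simp: children_def)
  have c2: "C2 \<in> F" "C2 \<subset> L" "\<not> (\<exists>D\<in>F. C2 \<subset> D \<and> D \<subset> L)" using assms(3) by (auto simp: children_def)
  have "C1 \<subseteq> C2 \<or> C2 \<subseteq> C1 \<or> C1 \<inter> C2 = {}" using assms(1) c1(1) c2(1) unfolding laminar_def by blast
  moreover have "\<not> C1 \<subseteq> C2"
  proof
    assume "C1 \<subseteq> C2" then have "C1 \<subset> C2" using assms(4) by auto
    then show False using c1(3) c2(1,2) by blast
  qed
  moreover have "\<not> C2 \<subseteq> C1"
  proof
    assume "C2 \<subseteq> C1" then have "C2 \<subset> C1" using assms(4) by auto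
    then show False using c2(3) c1(1,2) by blast
  qed
  ultimately show ?thesis by blast
qed

lemma child_exists:
  assumes "finite L" "D \<in> F" "D \<subset> L"
  shows "\<exists>C\<in>children F L. D \<subseteq> C"
proof -
  define M where "M = {C\<in>F. D \<subseteq> C \<and> C \<subset> L}"
  have "M \<subseteq> Pow L" by (auto simp: M_def)
  then have "finite M" using assms(1) by (simp add: finite_subset)
  moreover have "D \<in> M" using assms by (auto simp: M_def)
  ultimately obtain C where C: "C \<in> M" "\<forall>b\<in>M. C \<le> b \<longrightarrow> C = b"
    using finite_has_maximal[of M] by blast
  have "C \<in> children F L"
    unfolding children_def using C by (auto simp: M_def)
  then show ?thesis using C by (auto simp: M_def)
qed

lemma cls_child:
  assumes "laminar F" "C \<in> children F L" "v \<in> C"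
  shows "cls F L v = C"
proof -
  have "(THE C. C \<in> children F L \<and> v \<in> C) = C"
    by (rule the_equality) (use assms child_disj in blast)+
  then show ?thesis using assms unfolding cls_def by auto
qed

lemma cls_nochild:
  assumes "\<not> (\<exists>C\<in>children F L. v \<in> C)"
  shows "cls F L v = {v}"
  using assms unfolding cls_def by auto

lemma children_sub: "children F L \<subseteq> Pow L"
  unfolding children_def by auto

lemma card_nodes:
  assumes lam: "laminar F" and ne: "\<forall>A\<in>F. A \<noteq> {}" and fin: "finite L"
  shows "real (card (contr_nodes F L)) - 1 + (\<Sum>C\<in>children F L. (real (card C) - 1)) = real (card L) - 1"
proof -
  define ch where "ch = children F L"
  define U where "U = L - \<Union>ch"
  have finch: "finite ch" using fin children_sub by (metis ch_def finite_Pow_iff finite_subset)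
  have chL: "\<And>C. C \<in> ch \<Longrightarrow> C \<subseteq> L" using children_sub ch_def by blast
  have finC: "\<And>C. C \<in> ch \<Longrightarrow> finite C" using chL fin finite_subset by blast
  have img: "contr_nodes F L = ch \<union> (\<lambda>v. {v}) ` U"
  proof
    show "contr_nodes F L \<subseteq> ch \<union> (\<lambda>v. {v}) ` U"
    proof
      fix N assume "N \<in> contr_nodes F L"
      then obtain v where v: "v \<in> L" "N = cls F L v" unfolding contr_nodes_def by auto
      show "N \<in> ch \<union> (\<lambda>v. {v}) ` U"
      proof (cases "\<exists>C\<in>ch. v \<in> C")
        case True
        then obtain C where "C \<in> ch" "v \<in> C" by blast
        then show ?thesis using cls_child[OF lam] v ch_def by auto
      next
        case False
        then show ?thesis using cls_nochild[of F L v] v by (auto simp: U_def ch_def)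
      qed
    qed
    show "ch \<union> (\<lambda>v. {v}) ` U \<subseteq> contr_nodes F L"
    proof
      fix N assume "N \<in> ch \<union> (\<lambda>v. {v}) ` U"
      then show "N \<in> contr_nodes F L"
      proof
        assume N: "N \<in> ch"
        then have "N \<in> F" by (auto simp: ch_def children_def)
        then obtain v where "v \<in> N" using ne by blast
        then have "cls F L v = N" using cls_child[OF lam] N ch_def by auto
        moreover have "v \<in> L" using chL N \<open>v \<in> N\<close> by blast
        ultimately show ?thesis unfolding contr_nodes_def by blast
      next
        assume "N \<in> (\<lambda>v. {v}) ` U"
        then obtain v where "v \<in> U" "N = {v}" by blast
        then have "cls F L v = N" using cls_nochild[of F L v] by (auto simp: U_def ch_def)
        then show ?thesis unfolding contr_nodes_def using \<open>v \<in> U\<close> U_def by blast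
      qed
    qed
  qed
  have disj: "ch \<inter> (\<lambda>v. {v}) ` U = {}" unfolding U_def by auto
  have finU: "finite U" using fin U_def by auto
  have "card (contr_nodes F L) = card ch + card ((\<lambda>v. {v}) ` U)"
    unfolding img by (rule card_Un_disjoint) (use finch finU disj in auto)
  also have "card ((\<lambda>v. {v}) ` U) = card U" by (rule card_image) (auto simp: inj_on_def)
  finally have c1: "card (contr_nodes F L) = card ch + card U" .
  have "card (\<Union>ch) = sum card ch"
    by (rule card_Union_disjoint) (use child_disj[OF lam] finC in \<open>auto simp: pairwise_def disjnt_def ch_def\<close>)
  moreover have "card L = card (\<Union>ch) + card U"
  proof -
    have "L = \<Union>ch \<union> U" using chL U_def by auto
    moreover have "finite (\<Union>ch)" using finch finC by auto
    ultimately show ?thesis using finU by (metis U_def Diff_disjoint card_Un_disjoint inf_commute)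
  qed
  ultimately have c2: "card L = sum card ch + card U" by simp
  have "(\<Sum>C\<in>ch. (real (card C) - 1)) = real (sum card ch) - real (card ch)"
    by (simp add: sum_subtractf)
  then show ?thesis using c1 c2 ch_def by simp
qed

lemma sub_decomp:
  assumes lam: "laminar F" and ne: "\<forall>A\<in>F. A \<noteq> {}" and finL: "finite L" and L: "L \<in> F"
  shows "{L0\<in>F. L0 \<subseteq> L} = insert L (\<Union>C\<in>children F L. {L0\<in>F. L0 \<subseteq> C})"
proof
  show "{L0\<in>F. L0 \<subseteq> L} \<subseteq> insert L (\<Union>C\<in>children F L. {L0\<in>F. L0 \<subseteq> C})"
  proof
    fix L0 assume L0: "L0 \<in> {L0\<in>F. L0 \<subseteq> L}"
    show "L0 \<in> insert L (\<Union>C\<in>children F L. {L0\<in>F. L0 \<subseteq> C})"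
    proof (cases "L0 = L")
      case False
      then have "L0 \<subset> L" using L0 by auto
      then obtain C where "C \<in> children F L" "L0 \<subseteq> C" using child_exists[OF finL] L0 by blast
      then show ?thesis using L0 by blast
    qed simp
  qed
  show "insert L (\<Union>C\<in>children F L. {L0\<in>F. L0 \<subseteq> C}) \<subseteq> {L0\<in>F. L0 \<subseteq> L}"
    using L children_sub by blast
qed

lemma sum_sub:
  assumes lam: "laminar F" and ne: "\<forall>A\<in>F. A \<noteq> {}" and finF: "\<forall>A\<in>F. finite A" and L: "L \<in> F"
  shows "(\<Sum>L0\<in>{L0\<in>F. L0 \<subseteq> L}. real (card (contr_nodes F L0)) - 1) = real (card L) - 1"
  using L
proof (induction "card L" arbitrary: L rule: less_induct)
  case less
  define g where "g = (\<lambda>L0. real (card (contr_nodes F L0)) - 1)"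
  define ch where "ch = children F L"
  have finL: "finite L" using finF less.prems by auto
  have finch: "finite ch" using finL children_sub by (metis ch_def finite_Pow_iff finite_subset)
  have chF: "\<And>C. C \<in> ch \<Longrightarrow> C \<in> F \<and> C \<subset> L" by (auto simp: ch_def children_def)
  have finsub: "\<And>X. finite X \<Longrightarrow> finite {L0\<in>F. L0 \<subseteq> X}"
    by (rule finite_subset[of _ "Pow _"]) auto
  have dec: "{L0\<in>F. L0 \<subseteq> L} = insert L (\<Union>C\<in>ch. {L0\<in>F. L0 \<subseteq> C})"
    unfolding ch_def by (rule sub_decomp[OF lam ne finL less.prems])
  have notin: "L \<notin> (\<Union>C\<in>ch. {L0\<in>F. L0 \<subseteq> C})" using chF by blast
  have finC: "\<And>C. C \<in> ch \<Longrightarrow> finite C" using chF finF by blast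
  have "sum g (\<Union>C\<in>ch. {L0\<in>F. L0 \<subseteq> C}) = (\<Sum>C\<in>ch. sum g {L0\<in>F. L0 \<subseteq> C})"
  proof (rule sum.UNION_disjoint)
    show "finite ch" by (rule finch)
    show "\<forall>C\<in>ch. finite {L0\<in>F. L0 \<subseteq> C}" using finsub finC by blast
    show "\<forall>C1\<in>ch. \<forall>C2\<in>ch. C1 \<noteq> C2 \<longrightarrow> {L0\<in>F. L0 \<subseteq> C1} \<inter> {L0\<in>F. L0 \<subseteq> C2} = {}"
    proof (intro ballI impI)
      fix C1 C2 assume "C1 \<in> ch" "C2 \<in> ch" "C1 \<noteq> C2"
      then have "C1 \<inter> C2 = {}" using child_disj[OF lam] ch_def by blast
      then show "{L0\<in>F. L0 \<subseteq> C1} \<inter> {L0\<in>F. L0 \<subseteq> C2} = {}" using ne by blast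
    qed
  qed
  also have "\<dots> = (\<Sum>C\<in>ch. real (card C) - 1)"
  proof (rule sum.cong[OF refl])
    fix C assume C: "C \<in> ch"
    then have "card C < card L" using chF finL psubset_card_mono by blast
    then show "sum g {L0\<in>F. L0 \<subseteq> C} = real (card C) - 1"
      using less.hyps[of C] chF C unfolding g_def by blast
  qed
  finally have e: "sum g (\<Union>C\<in>ch. {L0\<in>F. L0 \<subseteq> C}) = (\<Sum>C\<in>ch. real (card C) - 1)" .
  have "sum g {L0\<in>F. L0 \<subseteq> L} = g L + sum g (\<Union>C\<in>ch. {L0\<in>F. L0 \<subseteq> C})"
    unfolding dec by (rule sum.insert) (use finch finsub finC notin in auto)
  also have "\<dots> = real (card L) - 1"
    using card_nodes[OF lam ne finL] e unfolding g_def ch_def by simp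
  finally show ?case unfolding g_def .
qed




lemma contr_not_in_smaller:
  assumes "finite L2" "L1 \<in> F" "L1 \<subset> L2" "e \<in> contr_edges E ends F L2"
  shows "\<not> ends e \<subseteq> L1"
proof
  assume a: "ends e \<subseteq> L1"
  obtain C where "C \<in> children F L2" "L1 \<subseteq> C" using child_exists[OF assms(1-3)] by blast
  then show False using a assms(4) unfolding contr_edges_def by blast
qed

lemma contr_Ein: "contr_edges E ends F L \<subseteq> Ein E ends L"
  unfolding contr_edges_def by auto

lemma TL_disj:
  assumes lam: "laminar F" and finF: "\<forall>A\<in>F. finite A"
    and TLs: "\<forall>L0\<in>F. TL L0 \<subseteq> contr_edges E ends F L0"
    and nee: "\<forall>e\<in>E. ends e \<noteq> {}"
    and L: "L1 \<in> F" "L2 \<in> F" "L1 \<noteq> L2"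
  shows "TL L1 \<inter> TL L2 = {}"
proof (rule ccontr)
  assume "TL L1 \<inter> TL L2 \<noteq> {}"
  then obtain e where e: "e \<in> TL L1" "e \<in> TL L2" by blast
  have e1: "e \<in> contr_edges E ends F L1" using e(1) TLs L(1) by blast
  have e2: "e \<in> contr_edges E ends F L2" using e(2) TLs L(2) by blast
  have s1: "ends e \<subseteq> L1" "e \<in> E" using e1 unfolding contr_edges_def Ein_def by auto
  have s2: "ends e \<subseteq> L2" using e2 unfolding contr_edges_def Ein_def by auto
  have "ends e \<noteq> {}" using nee s1(2) by blast
  then have "L1 \<inter> L2 \<noteq> {}" using s1(1) s2 by blast
  moreover have "L1 \<subseteq> L2 \<or> L2 \<subseteq> L1 \<or> L1 \<inter> L2 = {}" using lam L(1,2) unfolding laminar_def by blast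
  ultimately have "L1 \<subset> L2 \<or> L2 \<subset> L1" using L(3) by blast
  then show False
  proof
    assume "L1 \<subset> L2"
    moreover have "finite L2" using finF L(2) by blast
    ultimately show False using contr_not_in_smaller[of L2 L1 F e E ends] e2 s1(1) L(1) by blast
  next
    assume "L2 \<subset> L1"
    moreover have "finite L1" using finF L(1) by blast
    ultimately show False using contr_not_in_smaller[of L1 L2 F e E ends] e1 s2 L(2) by blast
  qed
qed

lemma T_Ein:
  assumes lam: "laminar F" and finF: "\<forall>A\<in>F. finite A"
    and TLs: "\<forall>L0\<in>F. TL L0 \<subseteq> contr_edges E ends F L0"
    and nee: "\<forall>e\<in>E. ends e \<noteq> {}"
    and L: "L \<in> F"
  shows "(\<Union>L0\<in>F. TL L0) \<inter> Ein E ends L = (\<Union>L0\<in>{L0\<in>F. L0 \<subseteq> L}. TL L0)"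
proof
  show "(\<Union>L0\<in>{L0\<in>F. L0 \<subseteq> L}. TL L0) \<subseteq> (\<Union>L0\<in>F. TL L0) \<inter> Ein E ends L"
  proof
    fix e assume "e \<in> (\<Union>L0\<in>{L0\<in>F. L0 \<subseteq> L}. TL L0)"
    then obtain L0 where L0: "L0 \<in> F" "L0 \<subseteq> L" "e \<in> TL L0" by blast
    then have "e \<in> contr_edges E ends F L0" using TLs by blast
    then have "e \<in> Ein E ends L" using L0(2) unfolding contr_edges_def Ein_def by auto
    then show "e \<in> (\<Union>L0\<in>F. TL L0) \<inter> Ein E ends L" using L0 by blast
  qed
  show "(\<Union>L0\<in>F. TL L0) \<inter> Ein E ends L \<subseteq> (\<Union>L0\<in>{L0\<in>F. L0 \<subseteq> L}. TL L0)"
  proof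
    fix e assume e: "e \<in> (\<Union>L0\<in>F. TL L0) \<inter> Ein E ends L"
    then obtain L0 where L0: "L0 \<in> F" "e \<in> TL L0" by blast
    have e0: "e \<in> contr_edges E ends F L0" using L0 TLs by blast
    have s0: "ends e \<subseteq> L0" "e \<in> E" using e0 unfolding contr_edges_def Ein_def by auto
    have sL: "ends e \<subseteq> L" using e unfolding Ein_def by blast
    have "ends e \<noteq> {}" using nee s0(2) by blast
    then have "L0 \<inter> L \<noteq> {}" using s0(1) sL by blast
    moreover have "L0 \<subseteq> L \<or> L \<subseteq> L0 \<or> L0 \<inter> L = {}" using lam L L0(1) unfolding laminar_def by blast
    ultimately have "L0 \<subseteq> L \<or> L \<subset> L0" by blast
    moreover have "\<not> L \<subset> L0"
    proof
      assume "L \<subset> L0"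
      moreover have "finite L0" using finF L0(1) by blast
      ultimately show False using contr_not_in_smaller[of L0 L F e E ends] e0 sL L by blast
    qed
    ultimately show "e \<in> (\<Union>L0\<in>{L0\<in>F. L0 \<subseteq> L}. TL L0)" using L0 by blast
  qed
qed

lemma C1_count:
  assumes lam: "laminar F" and ne: "\<forall>A\<in>F. A \<noteq> {}" and finF: "\<forall>A\<in>F. finite A"
    and TLs: "\<forall>L0\<in>F. TL L0 \<subseteq> contr_edges E ends F L0 \<and> finite (TL L0) \<and> card (TL L0) + 1 = card (contr_nodes F L0)"
    and nee: "\<forall>e\<in>E. ends e \<noteq> {}"
    and L: "L \<in> F"
  shows "real (card ((\<Union>L0\<in>F. TL L0) \<inter> Ein E ends L)) = real (card L) - 1"
proof -
  have TLs1: "\<forall>L0\<in>F. TL L0 \<subseteq> contr_edges E ends F L0" using TLs by blast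
  have finsub: "finite {L0\<in>F. L0 \<subseteq> L}"
    by (rule finite_subset[of _ "Pow L"]) (use finF L in auto)
  have "card ((\<Union>L0\<in>F. TL L0) \<inter> Ein E ends L) = card (\<Union>L0\<in>{L0\<in>F. L0 \<subseteq> L}. TL L0)"
    using T_Ein[OF lam finF TLs1 nee L] by simp
  also have "\<dots> = (\<Sum>L0\<in>{L0\<in>F. L0 \<subseteq> L}. card (TL L0))"
    by (rule card_UN_disjoint) (use finsub TLs TL_disj[OF lam finF TLs1 nee] in auto)
  finally have "real (card ((\<Union>L0\<in>F. TL L0) \<inter> Ein E ends L)) = (\<Sum>L0\<in>{L0\<in>F. L0 \<subseteq> L}. real (card (TL L0)))"
    by simp
  also have "\<dots> = (\<Sum>L0\<in>{L0\<in>F. L0 \<subseteq> L}. real (card (contr_nodes F L0)) - 1)"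
  proof (rule sum.cong[OF refl])
    fix L0 assume "L0 \<in> {L0\<in>F. L0 \<subseteq> L}"
    then have "card (TL L0) + 1 = card (contr_nodes F L0)" using TLs by blast
    then show "real (card (TL L0)) = real (card (contr_nodes F L0)) - 1" by linarith
  qed
  also have "\<dots> = real (card L) - 1" by (rule sum_sub[OF lam ne finF L])
  finally show ?thesis .
qed




definition crossE :: "'e set \<Rightarrow> ('e \<Rightarrow> 'a set) \<Rightarrow> 'a set \<Rightarrow> 'a set \<Rightarrow> 'e set" where
  "crossE E ends S L = {e\<in>E. ends e \<subseteq> S \<union> L \<and> \<not> ends e \<subseteq> S \<and> \<not> ends e \<subseteq> L}"

lemma Ein_identity:
  fixes g :: "'e \<Rightarrow> real"
  assumes "finite E"
  shows "sum g (Ein E ends (S \<union> L)) + sum g (Ein E ends (S \<inter> L)) =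
         sum g (Ein E ends S) + sum g (Ein E ends L) + sum g (crossE E ends S L)"
proof -
  have fin: "finite (Ein E ends X)" for X using assms by (simp add: Ein_def)
  have finc: "finite (crossE E ends S L)" using assms by (simp add: crossE_def)
  have u: "Ein E ends (S \<union> L) = (Ein E ends S \<union> Ein E ends L) \<union> crossE E ends S L"
    unfolding Ein_def crossE_def by auto
  have d: "(Ein E ends S \<union> Ein E ends L) \<inter> crossE E ends S L = {}"
    unfolding Ein_def crossE_def by auto
  have i: "Ein E ends S \<inter> Ein E ends L = Ein E ends (S \<inter> L)"
    unfolding Ein_def by auto
  have "sum g (Ein E ends (S \<union> L)) = sum g (Ein E ends S \<union> Ein E ends L) + sum g (crossE E ends S L)"
    unfolding u by (rule sum.union_disjoint) (use fin finc d in auto)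
  also have "sum g (Ein E ends S \<union> Ein E ends L) = sum g (Ein E ends S) + sum g (Ein E ends L) - sum g (Ein E ends (S \<inter> L))"
    using sum_Un[OF fin fin, of g S L] i by simp
  finally show ?thesis by simp
qed

lemma Ein_V:
  assumes "graph V E ends"
  shows "Ein E ends V = E"
  using assms unfolding graph_def Ein_def by auto

lemma PST_le:
  assumes G: "graph V E ends" and x: "x \<in> PST V E ends" and A: "A \<noteq> {}" "A \<subseteq> V"
  shows "sum x (Ein E ends A) \<le> real (card A) - 1"
proof (cases "A = V")
  case True
  then show ?thesis using x Ein_V[OF G] unfolding PST_def by simp
next
  case False
  then show ?thesis using x A unfolding PST_def by auto
qed

lemma PST_nonneg:
  assumes x: "x \<in> PST V E ends" and "e \<in> E"
  shows "0 \<le> x e"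
  using assms unfolding PST_def by auto

lemma uncross:
  assumes G: "graph V E ends" and x: "x \<in> PST V E ends"
    and S: "tight V E ends x S" and L: "tight V E ends x L" and SL: "S \<inter> L \<noteq> {}"
  shows "tight V E ends x (S \<union> L)" "tight V E ends x (S \<inter> L)" "\<forall>e\<in>crossE E ends S L. x e = 0"
proof -
  have finE: "finite E" and finV: "finite V" using G unfolding graph_def by auto
  have Ss: "S \<subseteq> V" "S \<noteq> {}" "sum x (Ein E ends S) = real (card S) - 1" using S unfolding tight_def by auto
  have Ls: "L \<subseteq> V" "L \<noteq> {}" "sum x (Ein E ends L) = real (card L) - 1" using L unfolding tight_def by auto
  have u: "sum x (Ein E ends (S \<union> L)) \<le> real (card (S \<union> L)) - 1"
    by (rule PST_le[OF G x]) (use Ss Ls in auto)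
  have i: "sum x (Ein E ends (S \<inter> L)) \<le> real (card (S \<inter> L)) - 1"
    by (rule PST_le[OF G x]) (use Ss Ls SL in auto)
  have c: "card (S \<union> L) + card (S \<inter> L) = card S + card L"
    using card_Un_Int[of S L] finV Ss(1) Ls(1) finite_subset by metis
  have cnn: "0 \<le> sum x (crossE E ends S L)"
    by (rule sum_nonneg) (use PST_nonneg[OF x] in \<open>simp add: crossE_def\<close>)
  have id: "sum x (Ein E ends (S \<union> L)) + sum x (Ein E ends (S \<inter> L)) =
         sum x (Ein E ends S) + sum x (Ein E ends L) + sum x (crossE E ends S L)"
    by (rule Ein_identity[OF finE])
  have c': "real (card (S \<union> L)) + real (card (S \<inter> L)) = real (card S) + real (card L)"
    using c by (metis of_nat_add)
  have z: "sum x (crossE E ends S L) = 0" using u i id c' Ss(3) Ls(3) cnn by linarith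
  have eu: "sum x (Ein E ends (S \<union> L)) = real (card (S \<union> L)) - 1" using u i id c' Ss(3) Ls(3) cnn by linarith
  have ei: "sum x (Ein E ends (S \<inter> L)) = real (card (S \<inter> L)) - 1" using u i id c' Ss(3) Ls(3) cnn by linarith
  show "tight V E ends x (S \<union> L)" unfolding tight_def using eu Ss Ls by auto
  show "tight V E ends x (S \<inter> L)" unfolding tight_def using ei Ss Ls SL by auto
  have "finite (crossE E ends S L)" using finE by (simp add: crossE_def)
  moreover have "\<forall>e\<in>crossE E ends S L. 0 \<le> x e" using PST_nonneg[OF x] by (simp add: crossE_def)
  ultimately show "\<forall>e\<in>crossE E ends S L. x e = 0" using z sum_nonneg_eq_0_iff by blast
qed

lemma card_ind:
  assumes "finite A"
  shows "sum (\<lambda>e. if e \<in> T then (1::real) else 0) A = real (card (T \<inter> A))"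
proof -
  have "sum (\<lambda>e. if e \<in> T then (1::real) else 0) A = sum (\<lambda>_. 1) (A \<inter> T)"
    using assms by (simp add: sum.If_cases)
  then show ?thesis by (simp add: Int_commute)
qed




definition crosses :: "'a set \<Rightarrow> 'a set \<Rightarrow> bool" where
  "crosses L S \<longleftrightarrow> L \<inter> S \<noteq> {} \<and> \<not> L \<subseteq> S \<and> \<not> S \<subseteq> L"

lemma cross_inter:
  assumes lam: "laminar \<L>" and L: "L \<in> \<L>" "crosses L S"
  shows "{L'\<in>\<L>. crosses L' (S \<inter> L)} \<subseteq> {L'\<in>\<L>. crosses L' S} - {L}"
proof
  fix L' assume a: "L' \<in> {L'\<in>\<L>. crosses L' (S \<inter> L)}"
  then have L'L: "L' \<in> \<L>" and c: "L' \<inter> (S \<inter> L) \<noteq> {}" "\<not> L' \<subseteq> S \<inter> L" "\<not> S \<inter> L \<subseteq> L'"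
    by (auto simp: crosses_def)
  have "L' \<subseteq> L \<or> L \<subseteq> L' \<or> L' \<inter> L = {}" using lam L(1) L'L unfolding laminar_def by blast
  then have "L' \<subseteq> L" using c by blast
  then have "crosses L' S" "L' \<noteq> L" using c unfolding crosses_def by blast+
  then show "L' \<in> {L'\<in>\<L>. crosses L' S} - {L}" using L'L by blast
qed

lemma cross_union:
  assumes lam: "laminar \<L>" and L: "L \<in> \<L>" "crosses L S"
  shows "{L'\<in>\<L>. crosses L' (S \<union> L)} \<subseteq> {L'\<in>\<L>. crosses L' S} - {L}"
proof
  fix L' assume a: "L' \<in> {L'\<in>\<L>. crosses L' (S \<union> L)}"
  then have L'L: "L' \<in> \<L>" and c: "L' \<inter> (S \<union> L) \<noteq> {}" "\<not> L' \<subseteq> S \<union> L" "\<not> S \<union> L \<subseteq> L'"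
    by (auto simp: crosses_def)
  have cL: "L \<inter> S \<noteq> {}" "\<not> L \<subseteq> S" "\<not> S \<subseteq> L" using L(2) by (auto simp: crosses_def)
  have "L' \<subseteq> L \<or> L \<subseteq> L' \<or> L' \<inter> L = {}" using lam L(1) L'L unfolding laminar_def by blast
  then have "L \<subseteq> L' \<or> L' \<inter> L = {}" using c by blast
  then have "crosses L' S"
  proof
    assume "L \<subseteq> L'" then show ?thesis using c cL unfolding crosses_def by blast
  next
    assume "L' \<inter> L = {}" then show ?thesis using c cL unfolding crosses_def by blast
  qed
  moreover have "L' \<noteq> L" using c by blast
  ultimately show "L' \<in> {L'\<in>\<L>. crosses L' S} - {L}" using L'L by blast
qed

lemma C3:
  assumes G: "graph V E ends" and x: "x \<in> PST V E ends"
    and Ldec: "laminar_decomp V E ends x \<L>"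
    and TE: "T \<subseteq> E" and Tpos: "\<forall>e\<in>T. x e > 0"
    and cnt: "\<forall>L\<in>\<L>. real (card (T \<inter> Ein E ends L)) = real (card L) - 1"
    and S: "tight V E ends x S"
  shows "real (card S) - 1 \<le> real (card (T \<inter> Ein E ends S))"
  using S
proof (induction "card {L\<in>\<L>. crosses L S}" arbitrary: S rule: less_induct)
  case less
  have finE: "finite E" and finV: "finite V" using G unfolding graph_def by auto
  have lam: "laminar \<L>" and Lt: "\<forall>A\<in>\<L>. tight V E ends x A"
    and mx: "\<forall>\<L>'. \<L> \<subseteq> \<L>' \<and> laminar \<L>' \<and> (\<forall>A\<in>\<L>'. tight V E ends x A) \<longrightarrow> \<L>' = \<L>"
    using Ldec unfolding laminar_decomp_def by auto
  have finL: "finite \<L>"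
    by (rule finite_subset[of _ "Pow V"]) (use Lt finV in \<open>auto simp: tight_def\<close>)
  show ?case
  proof (cases "\<exists>L\<in>\<L>. crosses L S")
    case False
    have "laminar (insert S \<L>)"
      unfolding laminar_def
    proof (intro ballI)
      fix A B assume A: "A \<in> insert S \<L>" and B: "B \<in> insert S \<L>"
      show "A \<subseteq> B \<or> B \<subseteq> A \<or> A \<inter> B = {}"
      proof (cases "A = S")
        case True
        show ?thesis
        proof (cases "B = S")
          case False
          then have "B \<in> \<L>" using B by blast
          then show ?thesis using \<open>\<not> (\<exists>L\<in>\<L>. crosses L S)\<close> True unfolding crosses_def by blast
        qed (use True in blast)
      next
        case AF: False
        then have AL: "A \<in> \<L>" using A by blast
        show ?thesis
        proof (cases "B = S")
          case True
          then show ?thesis using \<open>\<not> (\<exists>L\<in>\<L>. crosses L S)\<close> AL unfolding crosses_def by blast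
        next
          case False
          then have "B \<in> \<L>" using B by blast
          then show ?thesis using lam AL unfolding laminar_def by blast
        qed
      qed
    qed
    moreover have "\<forall>A\<in>insert S \<L>. tight V E ends x A" using Lt less.prems by blast
    ultimately have "insert S \<L> = \<L>" using mx by blast
    then have "S \<in> \<L>" by blast
    then show ?thesis using cnt by simp
  next
    case True
    then obtain L where L: "L \<in> \<L>" "crosses L S" by blast
    have tL: "tight V E ends x L" using Lt L(1) by blast
    have SL: "S \<inter> L \<noteq> {}" using L(2) unfolding crosses_def by blast
    note unc = uncross[OF G x less.prems tL SL]
    have lt1: "card {L'\<in>\<L>. crosses L' (S \<inter> L)} < card {L\<in>\<L>. crosses L S}"
    proof (rule psubset_card_mono)
      show "finite {L\<in>\<L>. crosses L S}" using finL by simp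
      show "{L'\<in>\<L>. crosses L' (S \<inter> L)} \<subset> {L\<in>\<L>. crosses L S}"
        using cross_inter[OF lam L] L by blast
    qed
    have lt2: "card {L'\<in>\<L>. crosses L' (S \<union> L)} < card {L\<in>\<L>. crosses L S}"
    proof (rule psubset_card_mono)
      show "finite {L\<in>\<L>. crosses L S}" using finL by simp
      show "{L'\<in>\<L>. crosses L' (S \<union> L)} \<subset> {L\<in>\<L>. crosses L S}"
        using cross_union[OF lam L] L by blast
    qed
    have ih1: "real (card (S \<inter> L)) - 1 \<le> real (card (T \<inter> Ein E ends (S \<inter> L)))"
      using less.hyps[OF lt1] unc(2) by blast
    have ih2: "real (card (S \<union> L)) - 1 \<le> real (card (T \<inter> Ein E ends (S \<union> L)))"
      using less.hyps[OF lt2] unc(1) by blast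
    define g where "g = (\<lambda>e. if e \<in> T then (1::real) else 0)"
    have gc: "sum g (Ein E ends X) = real (card (T \<inter> Ein E ends X))" for X
      unfolding g_def by (rule card_ind) (use finE in \<open>simp add: Ein_def\<close>)
    have g0: "sum g (crossE E ends S L) = 0"
    proof -
      have "\<forall>e\<in>crossE E ends S L. g e = 0" using unc(3) Tpos unfolding g_def by fastforce
      then show ?thesis by simp
    qed
    have id: "sum g (Ein E ends (S \<union> L)) + sum g (Ein E ends (S \<inter> L)) =
         sum g (Ein E ends S) + sum g (Ein E ends L) + sum g (crossE E ends S L)"
      by (rule Ein_identity[OF finE])
    have Ss: "S \<subseteq> V" using less.prems unfolding tight_def by blast
    have Ls: "L \<subseteq> V" using tL unfolding tight_def by blast
    have c: "card (S \<union> L) + card (S \<inter> L) = card S + card L"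
      using card_Un_Int[of S L] finV Ss Ls finite_subset by metis
    have c': "real (card (S \<union> L)) + real (card (S \<inter> L)) = real (card S) + real (card L)"
      using c by (metis of_nat_add)
    have cL: "real (card (T \<inter> Ein E ends L)) = real (card L) - 1" using cnt L(1) by blast
    show ?thesis using id g0 gc[of S] gc[of L] gc[of "S \<union> L"] gc[of "S \<inter> L"] ih1 ih2 c' cL by linarith
  qed
qed




lemma sum_pert:
  fixes xs :: "'e \<Rightarrow> real"
  assumes "finite A"
  shows "sum (\<lambda>e. (1+\<epsilon>) * xs e - \<epsilon> * (if e \<in> T then 1 else 0)) A = (1+\<epsilon>) * sum xs A - \<epsilon> * real (card (T \<inter> A))"
proof -
  have "sum (\<lambda>e. (1+\<epsilon>) * xs e - \<epsilon> * (if e \<in> T then 1 else 0)) A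
      = (1+\<epsilon>) * sum xs A - \<epsilon> * sum (\<lambda>e. if e \<in> T then (1::real) else 0) A"
    by (simp add: sum_subtractf sum_distrib_left)
  then show ?thesis using card_ind[OF assms, of T] by simp
qed

lemma perturb:
  fixes xs w :: "'e \<Rightarrow> real"
  assumes G: "graph V E ends" and x: "xs \<in> PST V E ends" and TE: "T \<subseteq> E"
    and Tpos: "\<forall>e\<in>T. xs e > 0"
    and cardT: "real (card T) = real (card V) - 1"
    and tightT: "\<forall>S. tight V E ends xs S \<longrightarrow> real (card S) - 1 \<le> real (card (T \<inter> Ein E ends S))"
    and opt: "\<forall>x\<in>PST V E ends. (\<Sum>e\<in>E. w e * xs e) \<le> (\<Sum>e\<in>E. w e * x e)"
  shows "(\<Sum>e\<in>T. w e) \<le> (\<Sum>e\<in>E. w e * xs e)"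
proof -
  have finE: "finite E" and finV: "finite V" using G unfolding graph_def by auto
  have finT: "finite T" using TE finE finite_subset by blast
  define n where "n = real (card V)"
  define SL where "SL = (\<lambda>S. (real (card S) - 1 - sum xs (Ein E ends S)) / (n + 1)) `
      {S \<in> Pow V. S \<noteq> {} \<and> sum xs (Ein E ends S) < real (card S) - 1}"
  define M where "M = insert 1 (SL \<union> xs ` T)"
  define \<epsilon> where "\<epsilon> = Min M"
  have finM: "finite M" unfolding M_def SL_def using finV finT by auto
  have n0: "n \<ge> 0" by (simp add: n_def)
  have Mpos: "\<forall>m\<in>M. m > 0" unfolding M_def SL_def using Tpos n0 by auto
  have ep: "\<epsilon> > 0" unfolding \<epsilon>_def using finM Mpos by (simp add: M_def)
  have ele: "\<And>m. m \<in> M \<Longrightarrow> \<epsilon> \<le> m" unfolding \<epsilon>_def using finM by simp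
  define xe where "xe = (\<lambda>e. (1+\<epsilon>) * xs e - \<epsilon> * (if e \<in> T then 1 else 0))"
  have finEin: "\<And>S. finite (Ein E ends S)" using finE by (simp add: Ein_def)
  have sxe: "\<And>A. finite A \<Longrightarrow> sum xe A = (1+\<epsilon>) * sum xs A - \<epsilon> * real (card (T \<inter> A))"
    unfolding xe_def by (rule sum_pert)
  have sumE: "sum xs E = n - 1" using x unfolding PST_def n_def by simp
  have xnn: "\<And>e. e \<in> E \<Longrightarrow> 0 \<le> xs e" using x unfolding PST_def by simp
  have "xe \<in> PST V E ends"
    unfolding PST_def
  proof (intro CollectI conjI allI impI ballI)
    fix e assume e: "e \<in> E"
    show "0 \<le> xe e"
    proof (cases "e \<in> T")
      case True
      then have "\<epsilon> \<le> xs e" using ele by (simp add: M_def)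
      moreover have "0 \<le> \<epsilon> * xs e" using ep xnn[OF e] by simp
      ultimately show ?thesis using True by (simp add: xe_def algebra_simps)
    next
      case False
      then show ?thesis using ep xnn[OF e] by (simp add: xe_def)
    qed
  next
    fix S assume S: "S \<noteq> {} \<and> S \<subset> V"
    define a where "a = sum xs (Ein E ends S)"
    define k where "k = real (card (T \<inter> Ein E ends S))"
    have aler: "a \<le> real (card S) - 1" using x S unfolding PST_def a_def by auto
    have a0: "0 \<le> a" unfolding a_def by (rule sum_nonneg) (use xnn in \<open>auto simp: Ein_def\<close>)
    have aE: "a \<le> n - 1"
    proof -
      have "a \<le> sum xs E" unfolding a_def by (rule sum_mono2[OF finE]) (use xnn in \<open>auto simp: Ein_def\<close>)
      then show ?thesis using sumE by simp
    qed
    have k0: "0 \<le> k" by (simp add: k_def)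
    have eq: "sum xe (Ein E ends S) = (1+\<epsilon>) * a - \<epsilon> * k"
      using sxe[OF finEin[of S]] by (simp add: a_def k_def)
    show "sum xe (Ein E ends S) \<le> real (card S) - 1"
    proof (cases "a < real (card S) - 1")
      case True
      then have "(real (card S) - 1 - a) / (n + 1) \<in> M"
        unfolding M_def SL_def a_def using S by auto
      then have eps: "\<epsilon> \<le> (real (card S) - 1 - a) / (n + 1)" by (rule ele)
      have "\<epsilon> * a \<le> (real (card S) - 1 - a) / (n + 1) * a" using eps a0 by (rule mult_right_mono)
      also have "\<dots> \<le> (real (card S) - 1 - a)"
      proof -
        have "a / (n+1) \<le> 1" using aE n0 by (simp add: divide_simps)
        then have "(real (card S) - 1 - a) * (a / (n + 1)) \<le> (real (card S) - 1 - a) * 1"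
          using True by (intro mult_left_mono) auto
        then show ?thesis by simp
      qed
      finally have "\<epsilon> * a \<le> real (card S) - 1 - a" .
      moreover have "0 \<le> \<epsilon> * k" using ep k0 by simp
      ultimately show ?thesis using eq by (simp add: algebra_simps)
    next
      case False
      then have "a = real (card S) - 1" using aler by simp
      then have "tight V E ends xs S" unfolding tight_def a_def using S by auto
      then have "real (card S) - 1 \<le> k" using tightT k_def by blast
      then have "\<epsilon> * (real (card S) - 1) \<le> \<epsilon> * k" using ep by simp
      then show ?thesis using eq \<open>a = real (card S) - 1\<close> by (simp add: algebra_simps)
    qed
  next
    have "T \<inter> E = T" using TE by blast
    then have "sum xe E = (1+\<epsilon>) * (n - 1) - \<epsilon> * (n - 1)"
      using sxe[OF finE] sumE cardT n_def by simp
    then show "sum xe E = real (card V) - 1" by (simp add: n_def algebra_simps)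
  qed
  then have le: "(\<Sum>e\<in>E. w e * xs e) \<le> (\<Sum>e\<in>E. w e * xe e)" using opt by blast
  have "(\<Sum>e\<in>E. w e * xe e) = (1+\<epsilon>) * (\<Sum>e\<in>E. w e * xs e) - \<epsilon> * (\<Sum>e\<in>E. if e \<in> T then w e else 0)"
  proof -
    have "\<And>e. w e * xe e = (1+\<epsilon>) * (w e * xs e) - \<epsilon> * (if e \<in> T then w e else 0)"
      unfolding xe_def by (simp add: algebra_simps)
    then show ?thesis by (simp add: sum_subtractf sum_distrib_left)
  qed
  also have "(\<Sum>e\<in>E. if e \<in> T then w e else 0) = (\<Sum>e\<in>T. w e)"
    using finE TE by (simp add: sum.If_cases Int_absorb1 inf_commute)
  finally have "(\<Sum>e\<in>E. w e * xs e) \<le> (1+\<epsilon>) * (\<Sum>e\<in>E. w e * xs e) - \<epsilon> * (\<Sum>e\<in>T. w e)"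
    using le by simp
  then have "\<epsilon> * (\<Sum>e\<in>T. w e) \<le> \<epsilon> * (\<Sum>e\<in>E. w e * xs e)" by (simp add: algebra_simps)
  then show ?thesis using ep by simp
qed




definition cmbf :: "real \<Rightarrow> ('e \<Rightarrow> real) \<Rightarrow> ('e \<Rightarrow> real) \<Rightarrow> ('e \<Rightarrow> real)" where
  "cmbf t x z = (\<lambda>e. t * x e + (1-t) * z e)"

lemma coord_cont: "continuous_on A (\<lambda>x::'e \<Rightarrow> real. x e)"
  by (rule continuous_on_subset[OF continuous_on_product_coordinates]) simp

lemma lin_cont: "continuous_on A (\<lambda>x::'e \<Rightarrow> real. (\<Sum>e\<in>F. a e * x e))"
  by (intro continuous_on_sum continuous_on_mult continuous_on_const coord_cont)

lemma sum_cont: "continuous_on A (\<lambda>x::'e \<Rightarrow> real. sum x F)"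
  by (intro continuous_on_sum coord_cont)

lemma sum_cmb: "sum (cmbf t x z) F = t * sum x F + (1-t) * sum z F"
  unfolding cmbf_def by (simp add: sum.distrib sum_distrib_left)

lemma lin_cmb: "(\<Sum>e\<in>F. a e * cmbf t x z e) = t * (\<Sum>e\<in>F. a e * x e) + (1-t) * (\<Sum>e\<in>F. a e * z e)"
proof -
  have "\<And>e. a e * cmbf t x z e = t * (a e * x e) + (1-t) * (a e * z e)"
    unfolding cmbf_def by (simp add: algebra_simps)
  then show ?thesis by (simp add: sum.distrib sum_distrib_left)
qed

definition X0 :: "'a set \<Rightarrow> 'e set \<Rightarrow> ('e \<Rightarrow> 'a set) \<Rightarrow> ('e \<Rightarrow> real) set" where
  "X0 V E ends = {x \<in> PST V E ends. \<forall>e. e \<notin> E \<longrightarrow> x e = 0}"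

lemma X0_closed: "closed (X0 V E ends)"
proof -
  have eq: "X0 V E ends = (\<Inter>e\<in>E. {x. 0 \<le> x e}) \<inter>
     (\<Inter>S\<in>{S. S \<noteq> {} \<and> S \<subset> V}. {x. sum x (Ein E ends S) \<le> real (card S) - 1}) \<inter>
     {x. sum x E = real (card V) - 1} \<inter> (\<Inter>e\<in>-E. {x. x e = 0})"
    unfolding X0_def PST_def by auto
  show ?thesis unfolding eq
    by (intro closed_Int closed_INT ballI closed_Collect_le closed_Collect_eq continuous_on_const coord_cont sum_cont)
qed

lemma X0_compact:
  assumes "finite E"
  shows "compact (X0 V E ends)"
proof -
  define n where "n = real (card V)"
  define B where "B = (PiE UNIV (\<lambda>e. if e \<in> E then {0..n} else {0::real}))"
  have "compactin (product_topology (\<lambda>_. euclidean) UNIV) B"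
    unfolding B_def by (subst compactin_PiE) auto
  then have cB: "compact B" by (simp add: euclidean_product_topology)
  have "X0 V E ends \<subseteq> B"
  proof
    fix x assume x: "x \<in> X0 V E ends"
    have xnn: "\<forall>e\<in>E. 0 \<le> x e" and sE: "sum x E = n - 1" and z: "\<forall>e. e \<notin> E \<longrightarrow> x e = 0"
      using x unfolding X0_def PST_def n_def by auto
    have "x e \<in> (if e \<in> E then {0..n} else {0})" for e
    proof (cases "e \<in> E")
      case True
      have "x e \<le> sum x E" using True assms xnn by (intro member_le_sum) auto
      then show ?thesis using True xnn sE by auto
    qed (use z in auto)
    then show "x \<in> B" unfolding B_def by auto
  qed
  then have "X0 V E ends = B \<inter> X0 V E ends" by blast
  then show ?thesis using compact_Int_closed[OF cB X0_closed] by metis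
qed

lemma X0_conv:
  assumes "x \<in> X0 V E ends" "z \<in> X0 V E ends" "0 \<le> t" "t \<le> 1"
  shows "cmbf t x z \<in> X0 V E ends"
proof -
  have x: "(\<forall>e\<in>E. x e \<ge> 0) \<and> (\<forall>S. S \<noteq> {} \<and> S \<subset> V \<longrightarrow> sum x (Ein E ends S) \<le> real (card S) - 1) \<and>
      sum x E = real (card V) - 1 \<and> (\<forall>e. e \<notin> E \<longrightarrow> x e = 0)" using assms(1) unfolding X0_def PST_def by auto
  have z: "(\<forall>e\<in>E. z e \<ge> 0) \<and> (\<forall>S. S \<noteq> {} \<and> S \<subset> V \<longrightarrow> sum z (Ein E ends S) \<le> real (card S) - 1) \<and>
      sum z E = real (card V) - 1 \<and> (\<forall>e. e \<notin> E \<longrightarrow> z e = 0)" using assms(2) unfolding X0_def PST_def by auto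
  have t1: "0 \<le> 1 - t" using assms by simp
  show ?thesis unfolding X0_def PST_def
  proof (intro CollectI conjI allI impI ballI)
    fix e assume "e \<in> E" then show "0 \<le> cmbf t x z e" using x z assms t1 unfolding cmbf_def by simp
  next
    fix S assume S: "S \<noteq> {} \<and> S \<subset> V"
    have "t * sum x (Ein E ends S) \<le> t * (real (card S) - 1)" using x S assms by (intro mult_left_mono) auto
    moreover have "(1-t) * sum z (Ein E ends S) \<le> (1-t) * (real (card S) - 1)" using z S t1 by (intro mult_left_mono) auto
    ultimately show "sum (cmbf t x z) (Ein E ends S) \<le> real (card S) - 1" unfolding sum_cmb by (simp add: algebra_simps)
  next
    have "sum x E = real (card V) - 1" "sum z E = real (card V) - 1" using x z by auto
    moreover have "\<And>a::real. t * a + (1-t) * a = a" by (simp add: algebra_simps)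
    ultimately show "sum (cmbf t x z) E = real (card V) - 1" unfolding sum_cmb by simp
  next
    fix e assume "e \<notin> E" then show "cmbf t x z e = 0" using x z unfolding cmbf_def by simp
  qed
qed




lemma lagr_eq:
  assumes fE: "finite E" and fS: "finite \<S>"
  shows "(\<Sum>e\<in>E. cy E ends c \<S> y e * x e) = (\<Sum>e\<in>E. c e * x e) + (\<Sum>S\<in>\<S>. y S * sum x (delta E ends S))"
proof -
  have p: "\<And>e. cy E ends c \<S> y e * x e = c e * x e + (\<Sum>S\<in>\<S>. if e \<in> delta E ends S then y S * x e else 0)"
  proof -
    fix e
    have "(\<Sum>S\<in>{S\<in>\<S>. e \<in> delta E ends S}. y S) * x e = (\<Sum>S\<in>{S\<in>\<S>. e \<in> delta E ends S}. y S * x e)"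
      by (simp add: sum_distrib_right)
    also have "\<dots> = (\<Sum>S\<in>\<S>. if e \<in> delta E ends S then y S * x e else 0)"
      by (rule sum.inter_filter[OF fS])
    finally show "cy E ends c \<S> y e * x e = c e * x e + (\<Sum>S\<in>\<S>. if e \<in> delta E ends S then y S * x e else 0)"
      unfolding cy_def by (simp add: algebra_simps)
  qed
  have "(\<Sum>e\<in>E. \<Sum>S\<in>\<S>. if e \<in> delta E ends S then y S * x e else 0)
      = (\<Sum>S\<in>\<S>. \<Sum>e\<in>E. if e \<in> delta E ends S then y S * x e else 0)"
    by (rule sum.swap)
  also have "\<dots> = (\<Sum>S\<in>\<S>. y S * sum x (delta E ends S))"
  proof (rule sum.cong[OF refl])
    fix S
    have "(\<Sum>e\<in>E. if e \<in> delta E ends S then y S * x e else 0) = (\<Sum>e\<in>{e\<in>E. e \<in> delta E ends S}. y S * x e)"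
      by (rule sum.inter_filter[OF fE, symmetric])
    also have "{e\<in>E. e \<in> delta E ends S} = delta E ends S" unfolding delta_def by auto
    finally show "(\<Sum>e\<in>E. if e \<in> delta E ends S then y S * x e else 0) = y S * sum x (delta E ends S)"
      by (simp add: sum_distrib_left)
  qed
  finally show ?thesis unfolding p by (simp add: sum.distrib)
qed

lemma duality:
  fixes V :: "'a set" and E :: "'e set" and ends :: "'e \<Rightarrow> 'a set"
    and c :: "'e \<Rightarrow> real" and \<S> :: "'a set set" and b :: "'a set \<Rightarrow> int"
    and lam :: real and xs :: "'e \<Rightarrow> real" and ys :: "'a set \<Rightarrow> real"
  assumes G: "graph V E ends"
    and c_nonneg: "\<forall>e\<in>E. c e \<ge> 0"
    and fS: "finite \<S>"
    and xs_opt: "optimal_P V E ends c \<S> b lam xs"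
    and ys_opt: "optimal_dual V E ends c \<S> b lam ys"
  shows "(\<Sum>e\<in>E. cy E ends c \<S> ys e * xs e) = (\<Sum>e\<in>E. c e * xs e) + lam * (\<Sum>S\<in>\<S>. real_of_int (b S) * ys S)"
    and "\<forall>x\<in>PST V E ends. (\<Sum>e\<in>E. cy E ends c \<S> ys e * xs e) \<le> (\<Sum>e\<in>E. cy E ends c \<S> ys e * x e)"
proof -
  have fE: "finite E" using G unfolding graph_def by auto
  define OPT where "OPT = (\<Sum>e\<in>E. c e * xs e)"
  define phi where "phi = (\<lambda>y x. (\<Sum>e\<in>E. cy E ends c \<S> y e * x e) - lam * (\<Sum>S\<in>\<S>. real_of_int (b S) * y S))"
  define h where "h = (\<lambda>S (x::'e\<Rightarrow>real). sum x (delta E ends S) - lam * real_of_int (b S))"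
  have phi_eq: "phi y x = (\<Sum>e\<in>E. c e * x e) + (\<Sum>S\<in>\<S>. y S * h S x)" for y x
  proof -
    have "(\<Sum>S\<in>\<S>. y S * h S x) = (\<Sum>S\<in>\<S>. y S * sum x (delta E ends S)) - lam * (\<Sum>S\<in>\<S>. real_of_int (b S) * y S)"
      unfolding h_def by (simp add: algebra_simps sum_subtractf sum_distrib_left)
    then show ?thesis unfolding phi_def lagr_eq[OF fE fS] by simp
  qed
  have gdef: "g_lam V E ends c \<S> b lam y = Inf (phi y ` PST V E ends)" for y
    unfolding g_lam_def phi_def by simp
  have xsF: "feasible_P V E ends \<S> b lam xs" using xs_opt unfolding optimal_P_def by blast
  have xsP: "xs \<in> PST V E ends" using xsF unfolding feasible_P_def by blast
  have hxs: "\<forall>S\<in>\<S>. h S xs \<le> 0" using xsF unfolding feasible_P_def h_def by auto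
  have ys0: "\<forall>S\<in>\<S>. ys S \<ge> 0" using ys_opt unfolding optimal_dual_def by blast
  define zr where "zr = (\<lambda>x::'e\<Rightarrow>real. (\<lambda>e. if e \<in> E then x e else 0))"
  have zr_sum: "sum (zr x) F = sum x F" if "F \<subseteq> E" for x F
    using that unfolding zr_def by (intro sum.cong) auto
  have dE: "delta E ends S \<subseteq> E" for S unfolding delta_def by auto
  have EinE: "Ein E ends S \<subseteq> E" for S unfolding Ein_def by auto
  have zrP: "zr x \<in> X0 V E ends" if "x \<in> PST V E ends" for x
    using that zr_sum[OF EinE] zr_sum[OF order_refl] unfolding X0_def PST_def by (auto simp: zr_def)
  have zr_phi: "phi y (zr x) = phi y x" for y x
  proof -
    have "(\<Sum>e\<in>E. cy E ends c \<S> y e * zr x e) = (\<Sum>e\<in>E. cy E ends c \<S> y e * x e)"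
      unfolding zr_def by (intro sum.cong) auto
    then show ?thesis unfolding phi_def by simp
  qed
  have approx: "\<exists>y. (\<forall>S\<in>\<S>. 0 \<le> y S) \<and> (\<forall>x\<in>X0 V E ends. OPT - \<epsilon> \<le> (\<Sum>e\<in>E. c e * x e) + (\<Sum>S\<in>\<S>. y S * h S x))"
    if eps: "\<epsilon> > 0" for \<epsilon>
  proof (rule multi_dim[of \<S> "X0 V E ends" cmbf "\<lambda>x. \<Sum>e\<in>E. c e * x e" h "zr xs" OPT \<epsilon>])
    show "finite \<S>" by (rule fS)
    show "compact (X0 V E ends)" by (rule X0_compact[OF fE])
    show "cmbf t x z \<in> X0 V E ends" if "x \<in> X0 V E ends" "z \<in> X0 V E ends" "0 \<le> t" "t \<le> 1" for x z t
      using X0_conv that by blast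
    show "continuous_on (X0 V E ends) (\<lambda>x. \<Sum>e\<in>E. c e * x e)" by (rule lin_cont)
    show "continuous_on (X0 V E ends) (h S)" if "S \<in> \<S>" for S
      unfolding h_def by (intro continuous_on_diff sum_cont continuous_on_const)
    show "(\<Sum>e\<in>E. c e * cmbf t x z e) = t * (\<Sum>e\<in>E. c e * x e) + (1 - t) * (\<Sum>e\<in>E. c e * z e)" for x z t
      by (rule lin_cmb)
    show "h S (cmbf t x z) = t * h S x + (1 - t) * h S z" for S x z t
      unfolding h_def sum_cmb by (simp add: algebra_simps)
    show "zr xs \<in> X0 V E ends" using zrP[OF xsP] .
    show "h S (zr xs) \<le> 0" if "S \<in> \<S>" for S
      using hxs that zr_sum[OF dE] unfolding h_def by simp
    show "OPT \<le> (\<Sum>e\<in>E. c e * x e)" if "x \<in> X0 V E ends" "\<forall>S\<in>\<S>. h S x \<le> 0" for x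
    proof -
      have "feasible_P V E ends \<S> b lam x" using that unfolding feasible_P_def X0_def h_def by auto
      then show ?thesis using xs_opt unfolding optimal_P_def OPT_def by blast
    qed
    show "\<epsilon> > 0" by (rule eps)
  qed
  have PSTne: "PST V E ends \<noteq> {}" using xsP by blast
  have gapprox: "OPT - \<epsilon> \<le> g_lam V E ends c \<S> b lam ys" if eps: "\<epsilon> > 0" for \<epsilon>
  proof -
    obtain y where y: "\<forall>S\<in>\<S>. 0 \<le> y S" "\<forall>x\<in>X0 V E ends. OPT - \<epsilon> \<le> (\<Sum>e\<in>E. c e * x e) + (\<Sum>S\<in>\<S>. y S * h S x)"
      using approx[OF eps] by blast
    have "OPT - \<epsilon> \<le> g_lam V E ends c \<S> b lam y"
      unfolding gdef
    proof (rule cInf_greatest)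
      show "phi y ` PST V E ends \<noteq> {}" using PSTne by blast
      fix v assume "v \<in> phi y ` PST V E ends"
      then obtain x where x: "x \<in> PST V E ends" "v = phi y x" by blast
      have "OPT - \<epsilon> \<le> phi y (zr x)" using y(2) zrP[OF x(1)] phi_eq by simp
      then show "OPT - \<epsilon> \<le> v" using x zr_phi by simp
    qed
    also have "\<dots> \<le> g_lam V E ends c \<S> b lam ys" using ys_opt y(1) unfolding optimal_dual_def by blast
    finally show ?thesis .
  qed
  have gge: "OPT \<le> g_lam V E ends c \<S> b lam ys"
    by (rule field_le_epsilon) (use gapprox in \<open>simp add: algebra_simps\<close>)
  have cy0: "\<forall>e\<in>E. 0 \<le> cy E ends c \<S> ys e"
    unfolding cy_def using c_nonneg ys0 by (auto intro!: add_nonneg_nonneg sum_nonneg)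
  have bdd: "bdd_below (phi ys ` PST V E ends)"
  proof (rule bdd_belowI2)
    fix x assume x: "x \<in> PST V E ends"
    have "0 \<le> (\<Sum>e\<in>E. cy E ends c \<S> ys e * x e)"
      using cy0 x unfolding PST_def by (auto intro!: sum_nonneg)
    then show "- lam * (\<Sum>S\<in>\<S>. real_of_int (b S) * ys S) \<le> phi ys x" unfolding phi_def by simp
  qed
  have gle: "g_lam V E ends c \<S> b lam ys \<le> phi ys x" if "x \<in> PST V E ends" for x
    unfolding gdef by (rule cInf_lower) (use bdd that in auto)
  have sn: "(\<Sum>S\<in>\<S>. ys S * h S xs) \<le> 0"
    using ys0 hxs by (intro sum_nonpos) (simp add: mult_nonneg_nonpos)
  have phixs: "phi ys xs = OPT"
    using gle[OF xsP] gge sn phi_eq[of ys xs] unfolding OPT_def by linarith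
  show "(\<Sum>e\<in>E. cy E ends c \<S> ys e * xs e) = (\<Sum>e\<in>E. c e * xs e) + lam * (\<Sum>S\<in>\<S>. real_of_int (b S) * ys S)"
    using phixs unfolding phi_def OPT_def by simp
  show "\<forall>x\<in>PST V E ends. (\<Sum>e\<in>E. cy E ends c \<S> ys e * xs e) \<le> (\<Sum>e\<in>E. cy E ends c \<S> ys e * x e)"
  proof
    fix x assume x: "x \<in> PST V E ends"
    have "phi ys xs \<le> phi ys x" using gle[OF x] gge phixs by simp
    then show "(\<Sum>e\<in>E. cy E ends c \<S> ys e * xs e) \<le> (\<Sum>e\<in>E. cy E ends c \<S> ys e * x e)"
      unfolding phi_def by simp
  qed
qed




theorem lemma6:
  fixes V :: "'a set" and E :: "'e set" and ends :: "'e \<Rightarrow> 'a set"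
    and c :: "'e \<Rightarrow> real" and \<S> :: "'a set set" and b :: "'a set \<Rightarrow> int"
    and lam :: real and xs x' :: "'e \<Rightarrow> real" and \<L> \<L>' :: "'a set set"
    and TL :: "'a set \<Rightarrow> 'e set" and T :: "'e set" and ys :: "'a set \<Rightarrow> real"
  assumes G: "graph V E ends" and conn: "connected_on V E ends"
    and c_nonneg: "\<forall>e\<in>E. c e \<ge> 0"
    and chain: "chain_family V \<S>"
    and lam: "lam > 1"
    and feas: "\<exists>x. feasible_P V E ends \<S> b lam x"
    and xs_opt: "optimal_P V E ends c \<S> b lam xs"
    and L_dec: "laminar_decomp V E ends xs \<L>"
    and rf: "rainbow_free V E ends \<S> x' \<L>'"
    and supp_sub: "supp E x' \<subseteq> supp E xs"
    and L_sub: "\<L> \<subseteq> \<L>'"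
    and cut_le: "\<forall>S\<in>\<S>. sum x' (delta E ends S) \<le> sum xs (delta E ends S)"
    and TL: "\<forall>L0\<in>\<L>'. TL L0 \<subseteq> supp E x' \<and>
               spanning_tree (contr_nodes \<L>' L0) (contr_edges E ends \<L>' L0) (contr_ends ends \<L>' L0) (TL L0)"
    and T: "T = (\<Union>L0\<in>\<L>'. TL L0)"
    and ys_opt: "optimal_dual V E ends c \<S> b lam ys"
  shows "sum c T \<le> (\<Sum>e\<in>E. cy E ends c \<S> ys e * xs e) \<and>
         (\<Sum>e\<in>E. cy E ends c \<S> ys e * xs e) =
           (\<Sum>e\<in>E. c e * xs e) + lam * (\<Sum>S\<in>\<S>. real_of_int (b S) * ys S)"
proof -
  have fE: "finite E" and fV: "finite V" using G unfolding graph_def by auto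
  have fS: "finite \<S>" using chain unfolding chain_family_def by blast
  note du = duality[OF G c_nonneg fS xs_opt ys_opt]
  have xsP: "xs \<in> PST V E ends" using xs_opt unfolding optimal_P_def feasible_P_def by blast
  have dec': "laminar_decomp V E ends x' \<L>'" using rf unfolding rainbow_free_def by blast
  have lam': "laminar \<L>'" and tL': "\<forall>A\<in>\<L>'. tight V E ends x' A" and x'P: "x' \<in> PST V E ends"
    and mx': "\<forall>\<L>''. \<L>' \<subseteq> \<L>'' \<and> laminar \<L>'' \<and> (\<forall>A\<in>\<L>''. tight V E ends x' A) \<longrightarrow> \<L>'' = \<L>'"
    using dec' unfolding laminar_decomp_def by auto
  have ne': "\<forall>A\<in>\<L>'. A \<noteq> {}" using tL' unfolding tight_def by blast
  have sub': "\<forall>A\<in>\<L>'. A \<subseteq> V" using tL' unfolding tight_def by blast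
  have fin': "\<forall>A\<in>\<L>'. finite A" using sub' fV finite_subset by blast
  have TLs: "\<forall>L0\<in>\<L>'. TL L0 \<subseteq> contr_edges E ends \<L>' L0 \<and> finite (TL L0) \<and> card (TL L0) + 1 = card (contr_nodes \<L>' L0)"
    using TL unfolding spanning_tree_def by blast
  have nee: "\<forall>e\<in>E. ends e \<noteq> {}"
  proof
    fix e assume "e \<in> E"
    then have "card (ends e) = 2" using G unfolding graph_def by blast
    then show "ends e \<noteq> {}" by auto
  qed
  have cnt': "\<forall>L\<in>\<L>'. real (card (T \<inter> Ein E ends L)) = real (card L) - 1"
    unfolding T using C1_count[OF lam' ne' fin' TLs nee] by blast
  have cnt: "\<forall>L\<in>\<L>. real (card (T \<inter> Ein E ends L)) = real (card L) - 1" using cnt' L_sub by blast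
  have suppE: "supp E x' \<subseteq> E" unfolding supp_def by blast
  have TE: "T \<subseteq> E" unfolding T using TL suppE by blast
  have Tpos: "\<forall>e\<in>T. xs e > 0"
  proof
    fix e assume "e \<in> T"
    then have "e \<in> supp E xs" unfolding T using TL supp_sub by blast
    then show "xs e > 0" unfolding supp_def by blast
  qed
  have Vne: "V \<noteq> {}"
  proof
    assume "V = {}"
    then have c0: "card V = 0" by simp
    have "sum xs E = real (card V) - 1" using xsP unfolding PST_def by blast
    then have "sum xs E = -1" using c0 by simp
    moreover have "0 \<le> sum xs E" by (rule sum_nonneg) (use PST_nonneg[OF xsP] in blast)
    ultimately show False by simp
  qed
  have tV: "tight V E ends x' V"
    unfolding tight_def using Vne x'P Ein_V[OF G] unfolding PST_def by simp
  have "laminar (insert V \<L>')"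
    using lam' sub' unfolding laminar_def by blast
  then have "insert V \<L>' = \<L>'" using mx' tV tL' by blast
  then have VL': "V \<in> \<L>'" by blast
  have cardT: "real (card T) = real (card V) - 1"
    using cnt' VL' Ein_V[OF G] TE by (metis inf.absorb1)
  have tightT: "\<forall>S. tight V E ends xs S \<longrightarrow> real (card S) - 1 \<le> real (card (T \<inter> Ein E ends S))"
    using C3[OF G xsP L_dec TE Tpos cnt] by blast
  have "(\<Sum>e\<in>T. cy E ends c \<S> ys e) \<le> (\<Sum>e\<in>E. cy E ends c \<S> ys e * xs e)"
    by (rule perturb[OF G xsP TE Tpos cardT tightT du(2)])
  moreover have "sum c T \<le> (\<Sum>e\<in>T. cy E ends c \<S> ys e)"
  proof (rule sum_mono)
    fix e assume "e \<in> T"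
    have "\<forall>S\<in>\<S>. ys S \<ge> 0" using ys_opt unfolding optimal_dual_def by blast
    then have "0 \<le> (\<Sum>S\<in>{S\<in>\<S>. e \<in> delta E ends S}. ys S)" by (intro sum_nonneg) auto
    then show "c e \<le> cy E ends c \<S> ys e" unfolding cy_def by simp
  qed
  ultimately show ?thesis using du(1) by simp
qed


end
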